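(* Let $\mathscr{C}\subseteq\mathrm{GF}(4)^n$ be a scalable code. The following are equivalent: (i) $\mathrm{Im}_{\mathscr{B}}(\mathscr{C})\subseteq\mathrm{GF}(2)^{2n}$ is self-orthogonal w.r.t. the canonical inner product $\sum_{i=1}^{2n}x_iy_i$ for some basis $\mathscr{B}$ of $\mathrm{GF}(4)$ over $\mathrm{GF}(2)$; (ii) $\mathrm{Im}_{\mathscr{B}}(\mathscr{C})$ is self-orthogonal w.r.t. the canonical inner product for all bases $\mathscr{B}$ of $\mathrm{GF}(4)$ over $\mathrm{GF}(2)$; (iii) $\mathscr{C}$ is self-orthogonal w.r.t. the canonical inner product $\sum_{i=1}^n x_iy_i$ on $\mathrm{GF}(4)^n$.
   Context: $\mathrm{Tr}:\mathrm{GF}(4)\to\mathrm{GF}(2)$, $\mathrm{Tr}(a)=a+a^2$. The dual basis of a basis $\{\gamma_1,\gamma_2\}$ of $\mathrm{GF}(4)$ over $\mathrm{GF}(2)$ is the unique basis $\{\beta_1,\beta_2\}$ with $\mathrm{Tr}(\gamma_i\beta_j)=\delta_{ij}$. A code $\mathscr{C}\subseteq\mathrm{GF}(4)^n$ is scalable if $x\in\mathscr{C}\Rightarrow\alpha x\in\mathscr{C}$ for all $\alpha\in\mathrm{GF}(4)$. For a basis $\mathscr{B}$ with dual basis $\{\beta_1,\beta_2\}$, $\mathrm{Im}_{\mathscr{B}}(\mathscr{C})=\{(\mathrm{Tr}(\beta_1x_1),\ldots,\mathrm{Tr}(\beta_1x_n),\mathrm{Tr}(\beta_2x_1),\ldots,\mathrm{Tr}(\beta_2x_n)):x\in\mathscr{C}\}$.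 A code $D$ is self-orthogonal w.r.t. a form $g$ if $g(x,y)=0$ for all $x,y\in D$. *)

theory Defs
  imports Main "HOL-Library.Z2"
begin

section \<open>The field GF(4) = {0, 1, w, w^2} with w^2 = w + 1\<close>

datatype gf4 = G0 | G1 | Gw | Gw2

instantiation gf4 :: field
begin

definition zero_gf4 :: gf4 where "0 = G0"
definition one_gf4 :: gf4 where "1 = G1"

fun plus_gf4 :: "gf4 \<Rightarrow> gf4 \<Rightarrow> gf4" where
  "plus_gf4 G0 y = y"
| "plus_gf4 x G0 = x"
| "plus_gf4 G1 G1 = G0"
| "plus_gf4 G1 Gw = Gw2"
| "plus_gf4 G1 Gw2 = Gw"
| "plus_gf4 Gw G1 = Gw2"
| "plus_gf4 Gw Gw = G0"
| "plus_gf4 Gw Gw2 = G1"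
| "plus_gf4 Gw2 G1 = Gw"
| "plus_gf4 Gw2 Gw = G1"
| "plus_gf4 Gw2 Gw2 = G0"

definition uminus_gf4 :: "gf4 \<Rightarrow> gf4" where "uminus_gf4 x = x"
definition minus_gf4 :: "gf4 \<Rightarrow> gf4 \<Rightarrow> gf4" where "minus_gf4 x y = x + y"

fun times_gf4 :: "gf4 \<Rightarrow> gf4 \<Rightarrow> gf4" where
  "times_gf4 G0 y = G0"
| "times_gf4 x G0 = G0"
| "times_gf4 G1 y = y"
| "times_gf4 x G1 = x"
| "times_gf4 Gw Gw = Gw2"
| "times_gf4 Gw Gw2 = G1"
| "times_gf4 Gw2 Gw = G1"
| "times_gf4 Gw2 Gw2 = Gw"

definition inverse_gf4 :: "gf4 \<Rightarrow> gf4" where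
  "inverse_gf4 x = (case x of G0 \<Rightarrow> G0 | G1 \<Rightarrow> G1 | Gw \<Rightarrow> Gw2 | Gw2 \<Rightarrow> Gw)"

definition divide_gf4 :: "gf4 \<Rightarrow> gf4 \<Rightarrow> gf4" where "divide_gf4 x y = x * inverse y"

instance
proof
  fix a b c :: gf4
  show "a + b + c = a + (b + c)" by (cases a; cases b; cases c) simp_all
  show "a + b = b + a" by (cases a; cases b) simp_all
  show "0 + a = a" by (simp add: zero_gf4_def)
  show "- a + a = 0" by (cases a) (simp_all add: uminus_gf4_def zero_gf4_def)
  show "a - b = a + - b" by (simp add: minus_gf4_def uminus_gf4_def)
  show "a * b * c = a * (b * c)" by (cases a; cases b; cases c) simp_all
  show "a * b = b * a" by (cases a; cases b) simp_all
  show "1 * a = a" by (cases a) (simp_all add: one_gf4_def)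
  show "(a + b) * c = a * c + b * c" by (cases a; cases b; cases c) simp_all
  show "(0::gf4) \<noteq> 1" by (simp add: zero_gf4_def one_gf4_def)
  show "a \<noteq> 0 \<Longrightarrow> inverse a * a = 1" by (cases a) (simp_all add: zero_gf4_def one_gf4_def inverse_gf4_def)
  show "divide a b = a * inverse b" by (simp add: divide_gf4_def)
  show "inverse (0::gf4) = 0" by (simp add: zero_gf4_def inverse_gf4_def)
qed

end

definition emb2 :: "bit \<Rightarrow> gf4" where
  "emb2 b = (if b = 0 then 0 else 1)"

text \<open>Tr(a) = a + a^2, which always lies in the prime field GF(2).\<close>
definition tr :: "gf4 \<Rightarrow> bit" where
  "tr a = (if a + a ^ 2 = 0 then 0 else 1)"

lemma emb2_tr: "emb2 (tr a) = a + a ^ 2"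
  by (cases a) (simp_all add: emb2_def tr_def power2_eq_square zero_gf4_def one_gf4_def)

definition is_basis :: "gf4 \<Rightarrow> gf4 \<Rightarrow> bool" where
  "is_basis g1 g2 \<longleftrightarrow> (\<forall>x. \<exists>!(a, b). x = emb2 a * g1 + emb2 b * g2)"

definition is_dual_basis :: "gf4 \<Rightarrow> gf4 \<Rightarrow> gf4 \<Rightarrow> gf4 \<Rightarrow> bool" where
  "is_dual_basis g1 g2 b1 b2 \<longleftrightarrow> is_basis b1 b2 \<and>
     tr (g1 * b1) = 1 \<and> tr (g1 * b2) = 0 \<and> tr (g2 * b1) = 0 \<and> tr (g2 * b2) = 1"

text \<open>Vectors of GF(q)^n are lists of length n.\<close>

definition scalable :: "gf4 list set \<Rightarrow> bool" where
  "scalable C \<longleftrightarrow> (\<forall>x\<in>C. \<forall>\<alpha>::gf4. map (\<lambda>xi. \<alpha> * xi) x \<in> C)"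

definition inner :: "'a::comm_semiring_1 list \<Rightarrow> 'a list \<Rightarrow> 'a" where
  "inner x y = sum_list (map2 (*) x y)"

definition self_orthogonal :: "'a::comm_semiring_1 list set \<Rightarrow> bool" where
  "self_orthogonal D \<longleftrightarrow> (\<forall>x\<in>D. \<forall>y\<in>D. inner x y = 0)"

text \<open>Image of a code under the basis with dual basis (b1, b2).\<close>
definition Im :: "gf4 \<Rightarrow> gf4 \<Rightarrow> gf4 list set \<Rightarrow> bit list set" where
  "Im b1 b2 C = (\<lambda>x. map (\<lambda>xi. tr (b1 * xi)) x @ map (\<lambda>xi. tr (b2 * xi)) x) ` C"

end

theory Submission
  imports Defs
begin

lemma gf4_all: "(\<forall>a::gf4. P a) \<longleftrightarrow> P G0 \<and> P G1 \<and> P Gw \<and> P Gw2"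
  by (metis gf4.exhaust)

lemma tr_add: "tr (a + b) = tr a + tr b"
  by (cases a; cases b) (simp_all add: tr_def power2_eq_square zero_gf4_def one_gf4_def)

lemma tr_zero[simp]: "tr 0 = 0"
  by (simp add: tr_def)

lemma bit_double: "(x::bit) + x = 0"
  by (cases x rule: bit.exhaust) simp_all

lemma B_one: "b \<noteq> 0 \<Longrightarrow> tr (b*a)*tr (b*c) = tr (b^2*a*c) + tr (a*c^2)"
  by (cases b; cases a; cases c)
     (simp_all add: tr_def power2_eq_square zero_gf4_def one_gf4_def)

lemma B_form: "b1 \<noteq> 0 \<Longrightarrow> b2 \<noteq> 0 \<Longrightarrow>
  tr (b1*a)*tr (b1*c) + tr (b2*a)*tr (b2*c) = tr ((b1^2+b2^2)*a*c)"
proof -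
  assume h: "b1 \<noteq> 0" "b2 \<noteq> 0"
  have "tr (b1*a)*tr (b1*c) + tr (b2*a)*tr (b2*c)
     = tr (b1^2*a*c) + tr (b2^2*a*c) + (tr (a*c^2) + tr (a*c^2))"
    by (simp only: B_one[OF h(1)] B_one[OF h(2)] add_ac)
  also have "\<dots> = tr ((b1^2+b2^2)*a*c)"
    by (simp only: bit_double add_0_right distrib_right tr_add)
  finally show ?thesis .
qed

lemma sq_ne: "(b1::gf4) \<noteq> b2 \<Longrightarrow> b1^2+b2^2 \<noteq> 0"
  by (cases b1; cases b2) (simp_all add: power2_eq_square zero_gf4_def)

lemma dual_nz: "is_dual_basis g1 g2 b1 b2 \<Longrightarrow> b1 \<noteq> 0 \<and> b2 \<noteq> 0 \<and> b1^2+b2^2 \<noteq> 0"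
proof -
  assume d: "is_dual_basis g1 g2 b1 b2"
  then have t: "tr (g1 * b1) = 1" "tr (g1 * b2) = 0" "tr (g2 * b2) = 1"
    unfolding is_dual_basis_def by auto
  have "b1 \<noteq> 0" using t(1) by auto
  moreover have "b2 \<noteq> 0" using t(3) by auto
  moreover have "b1 \<noteq> b2" using t(1,2) by auto
  ultimately show ?thesis using sq_ne by blast
qed

lemma inner_Cons: "inner (a # x) (b # y) = a * b + inner x y"
  by (simp add: inner_def)

lemma inner_Nil: "inner [] y = 0"
  by (simp add: inner_def)

lemma inner_append: "length x1 = length y1 \<Longrightarrow>
   inner (x1 @ x2) (y1 @ y2) = inner x1 y1 + inner x2 y2"
  by (simp add: inner_def zip_append)

lemma inner_tr: "length x = length y \<Longrightarrow>
  inner (map (\<lambda>xi. tr (b1 * xi)) x) (map (\<lambda>xi. tr (b1 * xi)) y) +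
  inner (map (\<lambda>xi. tr (b2 * xi)) x) (map (\<lambda>xi. tr (b2 * xi)) y)
  = tr ((b1^2+b2^2) * inner x y)" if "b1 \<noteq> 0" "b2 \<noteq> 0"
proof (induction x arbitrary: y)
  case Nil
  then show ?case by (simp add: inner_def)
next
  case (Cons a x)
  then obtain c y' where y: "y = c # y'" "length x = length y'" by (cases y) auto
  have "inner (map (\<lambda>xi. tr (b1 * xi)) (a#x)) (map (\<lambda>xi. tr (b1 * xi)) y) +
  inner (map (\<lambda>xi. tr (b2 * xi)) (a#x)) (map (\<lambda>xi. tr (b2 * xi)) y)
   = (tr (b1*a)*tr (b1*c) + tr (b2*a)*tr (b2*c)) + (
  inner (map (\<lambda>xi. tr (b1 * xi)) x) (map (\<lambda>xi. tr (b1 * xi)) y') +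
  inner (map (\<lambda>xi. tr (b2 * xi)) x) (map (\<lambda>xi. tr (b2 * xi)) y'))"
    using y by (simp only: list.map inner_Cons add_ac)
  also have "\<dots> = tr ((b1^2+b2^2)*a*c) + tr ((b1^2+b2^2) * inner x y')"
    by (simp only: B_form[OF that] Cons.IH[OF y(2)])
  also have "\<dots> = tr ((b1^2+b2^2) * inner (a#x) y)"
    using y by (simp only: list.map inner_Cons distrib_left mult.assoc tr_add)
  finally show ?case .
qed

lemma inner_Im: "b1 \<noteq> 0 \<Longrightarrow> b2 \<noteq> 0 \<Longrightarrow> length x = length y \<Longrightarrow>
  inner (map (\<lambda>xi. tr (b1 * xi)) x @ map (\<lambda>xi. tr (b2 * xi)) x)
        (map (\<lambda>xi. tr (b1 * xi)) y @ map (\<lambda>xi. tr (b2 * xi)) y)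
  = tr ((b1^2+b2^2) * inner x y)"
  by (simp only: inner_append length_map) (metis inner_tr)

lemma inner_scale: "inner (map (\<lambda>xi. \<alpha> * xi) x) y = \<alpha> * inner x (y::gf4 list)"
proof (induction x arbitrary: y)
  case Nil then show ?case by (simp add: inner_def)
next
  case (Cons a x) then show ?case
    by (cases y) (simp_all add: inner_def algebra_simps)
qed

lemma tr_all_zero: "l \<noteq> 0 \<Longrightarrow> (\<forall>\<alpha>. tr (l * (\<alpha> * s)) = 0) \<Longrightarrow> s = 0"
  unfolding gf4_all
  by (cases l; cases s) (simp_all add: tr_def power2_eq_square zero_gf4_def one_gf4_def)

lemma so_Im_iff:
  assumes len: "C \<subseteq> {x. length x = n}" and sc: "scalable C"
    and d: "is_dual_basis g1 g2 b1 b2"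
  shows "self_orthogonal (Im b1 b2 C) \<longleftrightarrow> self_orthogonal C"
proof -
  from dual_nz[OF d] have nz: "b1 \<noteq> 0" "b2 \<noteq> 0" "b1^2+b2^2 \<noteq> 0" by auto
  have "self_orthogonal (Im b1 b2 C) \<longleftrightarrow> (\<forall>x\<in>C. \<forall>y\<in>C. tr ((b1^2+b2^2) * inner x y) = 0)"
    unfolding self_orthogonal_def Im_def using len
    by (auto simp: inner_Im[OF nz(1,2)] subset_iff)
  also have "\<dots> \<longleftrightarrow> self_orthogonal C"
  proof
    assume H: "\<forall>x\<in>C. \<forall>y\<in>C. tr ((b1^2+b2^2) * inner x y) = 0"
    show "self_orthogonal C" unfolding self_orthogonal_def
    proof (intro ballI)
      fix x y assume xy: "x \<in> C" "y \<in> C"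
      have "\<forall>\<alpha>. tr ((b1^2+b2^2) * (\<alpha> * inner x y)) = 0"
      proof
        fix \<alpha>
        have "map (\<lambda>xi. \<alpha> * xi) x \<in> C" using sc xy unfolding scalable_def by auto
        then show "tr ((b1^2+b2^2) * (\<alpha> * inner x y)) = 0"
          using H xy by (metis inner_scale)
      qed
      then show "inner x y = 0" using tr_all_zero nz(3) by blast
    qed
  next
    assume "self_orthogonal C"
    then show "\<forall>x\<in>C. \<forall>y\<in>C. tr ((b1^2+b2^2) * inner x y) = 0"
      unfolding self_orthogonal_def by simp
  qed
  finally show ?thesis .
qed

lemma bit_cases2: "(\<exists>!(a, b). P a b) \<longleftrightarrow>
   (if P 0 0 then \<not> P 0 1 \<and> \<not> P 1 0 \<and> \<not> P 1 1
    else if P 0 1 then \<not> P 1 0 \<and> \<not> P 1 1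
    else if P 1 0 then \<not> P 1 1 else P (1::bit) (1::bit))"
proof -
  have all: "\<And>Q. (\<forall>x::bit. Q x) \<longleftrightarrow> Q 0 \<and> Q 1"
    by (metis bit.exhaust)
  have ex: "\<And>Q. (\<exists>x::bit. Q x) \<longleftrightarrow> Q 0 \<or> Q 1"
    by (metis bit.exhaust)
  show ?thesis unfolding Ex1_def split_paired_Ex split_paired_All all ex
    by auto
qed

lemma is_basis_1w: "is_basis 1 Gw"
  unfolding is_basis_def bit_cases2 gf4_all
  by (simp add: emb2_def zero_gf4_def one_gf4_def)

lemma is_basis_w21: "is_basis Gw2 1"
  unfolding is_basis_def bit_cases2 gf4_all
  by (simp add: emb2_def zero_gf4_def one_gf4_def)

lemma is_basis_ex: "is_basis 1 Gw \<and> is_dual_basis 1 Gw Gw2 1"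
  unfolding is_dual_basis_def using is_basis_1w is_basis_w21
  by (simp add: zero_gf4_def one_gf4_def tr_def power2_eq_square)

theorem proposition1:
  fixes C :: "gf4 list set" and n :: nat
  assumes "C \<subseteq> {x. length x = n}"
    and "scalable C"
  shows "((\<exists>g1 g2 b1 b2. is_basis g1 g2 \<and> is_dual_basis g1 g2 b1 b2
              \<and> self_orthogonal (Im b1 b2 C))
          \<longleftrightarrow> (\<forall>g1 g2 b1 b2. is_basis g1 g2 \<and> is_dual_basis g1 g2 b1 b2
              \<longrightarrow> self_orthogonal (Im b1 b2 C)))
       \<and> ((\<forall>g1 g2 b1 b2. is_basis g1 g2 \<and> is_dual_basis g1 g2 b1 b2
              \<longrightarrow> self_orthogonal (Im b1 b2 C))
          \<longleftrightarrow> self_orthogonal C)"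
  using so_Im_iff[OF assms] is_basis_ex by blast

end
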